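(* Let $n\ge3$, $\boldsymbol\ell$ positive lengths, and $\xi$, $N>0$ smooth functions on $T^n$ depending only on $s^1$ with $\int_{T^n}\xi N\,dV_{\boldsymbol\ell}=0$; let $\mu,\tau^*\in\mathbb{R}$. Suppose either (a) $\mu,\tau^*$ are nonzero with the same sign and $c=(\mu/\tau^* )^{1/q}$, or (b) $\mu=\tau^*=0$ and $c>0$ is arbitrary. Let $r=c^{(q-2)/2}$, $\bar\tau=\tau^*+c^{-2q}\xi$, and let $(\bar g,\bar K)=(g_{r\boldsymbol\ell},\ \bar\tau(r\ell_1)^2(ds^1)^2)$ be the solution of the constraint equations generated (via the CTS-H$^*$ method with $\phi\equiv c$) by the data $(g_{\boldsymbol\ell},\mu\sigma^\flat_{\boldsymbol\ell},\tau^*,\xi,N)$. Let $$\tau^\circ=\frac{\int_{T^n}\bar\tau\,dV_{\bar g}}{\int_{T^n}1\,dV_{\bar g}},\qquad \hat{\boldsymbol\ell}=(r\ell_2,\ldots,r\ell_n).$$ If $\tau^\circ\neq0$, then $\bar g,\bar K$ are the induced metric and second fundamental form of a simple product embedding into the flat Kasner spacetime $\mathcal K_\Psi\times T^{n-1}_{\hat{\boldsymbol\ell}}$ with $\Psi=(r\ell_1)\tau^\circ$. If $\tau^\circ=0$, then $\bar g,\bar K$ are induced by a simple product embedding into a static toroidal spacetime $\mathcal C_L\times T^{n-1}_{\hat{\boldsymbol\ell}}$ for some $L>0$.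
   Context: $q=\frac{2n}{n-2}$, $\kappa=\frac{n-1}{n}$. $T^n=(\mathbb{R}/\mathbb{Z})^n$, unit coordinates $(s^1,\ldots,s^n)$; $g_{\boldsymbol\ell}=\sum_k\ell_k^2(ds^k)^2$, volume form $dV_{\boldsymbol\ell}$; $T^m_{\hat{\boldsymbol\ell}}$ is $T^m$ with $g_{\hat{\boldsymbol\ell}}$; $\sigma^\flat_{\boldsymbol\ell}=\kappa\ell_1^2(ds^1)^2-\frac1n\sum_{k\ge2}\ell_k^2(ds^k)^2$. CTS-H$^*$ method: for data $(g,\sigma,\tau^*,\xi,N)$ a solution is $(\phi>0,W)$ such that $\bar g=\phi^{q-2}g$, $\bar K=\phi^{-2}(\sigma+\frac1{2N}(L_Wg-\frac2n(\mathrm{div}W)g))+\frac{\tau^*+\phi^{-2q}\xi}{n}\bar g$ solves the Einstein constraint equations. $\mathbb{R}^{1,1}$: coordinates $(t,x)$, metric $-dt^2+dx^2$, time-oriented by $\partial_t$, $I_\pm=\{\pm t>|x|\}$; $B_\Psi$ the linear boost with matrix $\begin{pmatrix}\cosh\Psi&\sinh\Psi\\\sinh\Psi&\cosh\Psi\end{pmatrix}$; $\mathcal K_\Psi=I_+/\langle B_\Psi\rangle$ ($\Psi>0$) or $I_-/\langle B_\Psi\rangle$ ($\Psi<0$); $\mathcal C_L=\mathbb{R}^{1,1}/\langle(t,x)\mapsto(t,x+L)\rangle$. Products carry product Lorentzian metrics. A simple product embedding is $\iota(s^1,\ldots,s^n)=(\gamma(s^1),(s^2,\ldots,s^n))$ for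 a curve $\gamma$ in the 2-dimensional factor. Second fundamental form: $K(X,Y)=-\langle n,\nabla_XY\rangle$, $n$ the future unit normal. *)

theory Defs
  imports "HOL-Analysis.Analysis"
begin

definition smooth_real :: "(real \<Rightarrow> real) \<Rightarrow> bool" where
  "smooth_real f \<longleftrightarrow> (\<forall>k x. ((deriv ^^ k) f) differentiable (at x))"

text \<open>Points of T^n are represented by coordinate functions s :: nat => real
  (coordinates s 1, ..., s n in [0,1]).\<close>

definition torus_metric :: "nat \<Rightarrow> (nat \<Rightarrow> real) \<Rightarrow> nat \<Rightarrow> nat \<Rightarrow> real" where
  "torus_metric n l i j = (if i = j \<and> i \<in> {1..n} then (l i)^2 else 0)"

definition torus_integral :: "nat \<Rightarrow> (nat \<Rightarrow> real) \<Rightarrow> ((nat \<Rightarrow> real) \<Rightarrow> real) \<Rightarrow> real" where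
  "torus_integral n l F =
     (\<Prod>k\<in>{1..n}. l k) *
     integral\<^sup>L (PiM {1..n} (\<lambda>_. restrict_space lborel {0..1::real})) F"

definition mink :: "real \<times> real \<Rightarrow> real \<times> real \<Rightarrow> real" where
  "mink u v = - fst u * fst v + snd u * snd v"

definition boost :: "real \<Rightarrow> real \<times> real \<Rightarrow> real \<times> real" where
  "boost \<Psi> p = (cosh \<Psi> * fst p + sinh \<Psi> * snd p, sinh \<Psi> * fst p + cosh \<Psi> * snd p)"

definition I_plus :: "real \<times> real \<Rightarrow> bool" where
  "I_plus p \<longleftrightarrow> fst p > \<bar>snd p\<bar>"

definition I_minus :: "real \<times> real \<Rightarrow> bool" where
  "I_minus p \<longleftrightarrow> - fst p > \<bar>snd p\<bar>"

text \<open>Future unit normal (time orientation by d/dt, preserved by boosts and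
  spatial translations) to a tangent vector v.\<close>

definition future_unit_normal :: "real \<times> real \<Rightarrow> real \<times> real \<Rightarrow> bool" where
  "future_unit_normal v \<nu> \<longleftrightarrow> mink \<nu> v = 0 \<and> mink \<nu> \<nu> = -1 \<and> fst \<nu> > 0"

definition fnormal :: "real \<times> real \<Rightarrow> real \<times> real" where
  "fnormal v = (THE \<nu>. future_unit_normal v \<nu>)"

definition dcurve :: "(real \<Rightarrow> real \<times> real) \<Rightarrow> real \<Rightarrow> real \<times> real" where
  "dcurve \<gamma> s = vector_derivative \<gamma> (at s)"

definition ddcurve :: "(real \<Rightarrow> real \<times> real) \<Rightarrow> real \<Rightarrow> real \<times> real" where
  "ddcurve \<gamma> s = vector_derivative (dcurve \<gamma>) (at s)"

definition smooth_curve :: "(real \<Rightarrow> real \<times> real) \<Rightarrow> bool" where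
  "smooth_curve \<gamma> \<longleftrightarrow> smooth_real (\<lambda>s. fst (\<gamma> s)) \<and> smooth_real (\<lambda>s. snd (\<gamma> s))"

text \<open>A simple product embedding iota(s) = (gamma(s^1), (s^2,...,s^n)) of T^n into
  (2-dim flat factor) x T^{n-1}_{lhat}.  The curve gamma : R/Z -> factor is given by a
  lift gamma : R -> R^{1,1}.  Components of the induced metric and of the second
  fundamental form K(X,Y) = - <n, nabla_X Y> (n future unit normal) of iota in the
  coordinates s^1..s^n of T^n (lhat is indexed by 2..n).\<close>

definition sp_induced_metric ::
  "nat \<Rightarrow> (nat \<Rightarrow> real) \<Rightarrow> (real \<Rightarrow> real \<times> real) \<Rightarrow> nat \<Rightarrow> nat \<Rightarrow> (nat \<Rightarrow> real) \<Rightarrow> real" where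
  "sp_induced_metric n lhat \<gamma> i j s =
     (if i = 1 \<and> j = 1 then mink (dcurve \<gamma> (s 1)) (dcurve \<gamma> (s 1))
      else if i = j \<and> i \<in> {2..n} then (lhat i)^2 else 0)"

definition sp_sff ::
  "nat \<Rightarrow> (real \<Rightarrow> real \<times> real) \<Rightarrow> nat \<Rightarrow> nat \<Rightarrow> (nat \<Rightarrow> real) \<Rightarrow> real" where
  "sp_sff n \<gamma> i j s =
     (if i = 1 \<and> j = 1 then - mink (fnormal (dcurve \<gamma> (s 1))) (ddcurve \<gamma> (s 1)) else 0)"

text \<open>gamma (lift) descends to a smooth embedding R/Z -> K_Psi = I_(+/-) / <B_Psi>.\<close>

definition kasner_curve :: "real \<Rightarrow> (real \<Rightarrow> real \<times> real) \<Rightarrow> bool" where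
  "kasner_curve \<Psi> \<gamma> \<longleftrightarrow>
     \<Psi> \<noteq> 0 \<and> smooth_curve \<gamma> \<and>
     (\<Psi> > 0 \<longrightarrow> (\<forall>s. I_plus (\<gamma> s))) \<and> (\<Psi> < 0 \<longrightarrow> (\<forall>s. I_minus (\<gamma> s))) \<and>
     (\<exists>m::int. \<forall>s. \<gamma> (s + 1) = boost (of_int m * \<Psi>) (\<gamma> s)) \<and>
     (\<forall>s\<in>{0..<1}. \<forall>s'\<in>{0..<1}. (\<exists>k::int. \<gamma> s = boost (of_int k * \<Psi>) (\<gamma> s')) \<longrightarrow> s = s') \<and>
     (\<forall>s. dcurve \<gamma> s \<noteq> 0)"

text \<open>gamma (lift) descends to a smooth embedding R/Z -> C_L = R^{1,1} / <x -> x + L>.\<close>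

definition cylinder_curve :: "real \<Rightarrow> (real \<Rightarrow> real \<times> real) \<Rightarrow> bool" where
  "cylinder_curve L \<gamma> \<longleftrightarrow>
     L > 0 \<and> smooth_curve \<gamma> \<and>
     (\<exists>m::int. \<forall>s. \<gamma> (s + 1) = \<gamma> s + (0, of_int m * L)) \<and>
     (\<forall>s\<in>{0..<1}. \<forall>s'\<in>{0..<1}. (\<exists>k::int. \<gamma> s = \<gamma> s' + (0, of_int k * L)) \<longrightarrow> s = s') \<and>
     (\<forall>s. dcurve \<gamma> s \<noteq> 0)"

definition sp_induces ::
  "nat \<Rightarrow> (nat \<Rightarrow> real) \<Rightarrow> (real \<Rightarrow> real \<times> real) \<Rightarrow>
   (nat \<Rightarrow> nat \<Rightarrow> (nat \<Rightarrow> real) \<Rightarrow> real) \<Rightarrow> (nat \<Rightarrow> nat \<Rightarrow> (nat \<Rightarrow> real) \<Rightarrow> real) \<Rightarrow> bool" where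
  "sp_induces n lhat \<gamma> g K \<longleftrightarrow>
     (\<forall>i j s. g i j s = sp_induced_metric n lhat \<gamma> i j s) \<and>
     (\<forall>i j s. K i j s = sp_sff n \<gamma> i j s)"

end

theory Submission
  imports Defs "HOL-Probability.Probability"
begin


definition Ck :: "nat \<Rightarrow> (real \<Rightarrow> real) \<Rightarrow> bool" where
  "Ck k f \<longleftrightarrow> (\<forall>j\<le>k. \<forall>x. ((deriv ^^ j) f) differentiable (at x))"

lemma funpow_deriv_Suc: "(deriv ^^ Suc j) f = (deriv ^^ j) (deriv f)"
  by (simp add: funpow_Suc_right del: funpow.simps)

lemma Ck_0: "Ck 0 f \<longleftrightarrow> (\<forall>x. f differentiable (at x))"
  by (simp add: Ck_def)

lemma Ck_Suc: "Ck (Suc k) f \<longleftrightarrow> (\<forall>x. f differentiable (at x)) \<and> Ck k (deriv f)"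
proof
  assume "Ck (Suc k) f"
  then show "(\<forall>x. f differentiable (at x)) \<and> Ck k (deriv f)"
    unfolding Ck_def by (metis Suc_le_mono funpow_0 funpow_deriv_Suc le0)
next
  assume h: "(\<forall>x. f differentiable (at x)) \<and> Ck k (deriv f)"
  show "Ck (Suc k) f" unfolding Ck_def
  proof (intro allI impI)
    fix j x assume "j \<le> Suc k"
    then show "(deriv ^^ j) f differentiable at x"
      using h unfolding Ck_def by (cases j) (auto simp: funpow_deriv_Suc simp del: funpow.simps)
  qed
qed

lemma Ck_mono: "Ck (Suc k) f \<Longrightarrow> Ck k f"
  by (simp add: Ck_def)

lemma smooth_Ck: "smooth_real f \<longleftrightarrow> (\<forall>k. Ck k f)"
  unfolding smooth_real_def Ck_def by auto

lemma deriv_add_fun: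
  fixes f g :: "real \<Rightarrow> real"
  assumes "\<forall>x. f differentiable (at x)" "\<forall>x. g differentiable (at x)"
  shows "deriv (\<lambda>x. f x + g x) = (\<lambda>x. deriv f x + deriv g x)"
proof
  fix x
  have "(f has_real_derivative deriv f x) (at x)" "(g has_real_derivative deriv g x) (at x)"
    using assms by (auto simp: DERIV_deriv_iff_real_differentiable)
  then show "deriv (\<lambda>x. f x + g x) x = deriv f x + deriv g x"
    by (intro DERIV_imp_deriv derivative_intros)
qed

lemma deriv_mult_fun:
  fixes f g :: "real \<Rightarrow> real"
  assumes "\<forall>x. f differentiable (at x)" "\<forall>x. g differentiable (at x)"
  shows "deriv (\<lambda>x. f x * g x) = (\<lambda>x. deriv f x * g x + f x * deriv g x)"
proof
  fix x
  have "(f has_real_derivative deriv f x) (at x)" "(g has_real_derivative deriv g x) (at x)"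
    using assms by (auto simp: DERIV_deriv_iff_real_differentiable)
  then show "deriv (\<lambda>x. f x * g x) x = deriv f x * g x + f x * deriv g x"
    by (intro DERIV_imp_deriv) (auto intro!: derivative_eq_intros)
qed

lemma deriv_exp_fun:
  fixes f :: "real \<Rightarrow> real"
  assumes "\<forall>x. f differentiable (at x)"
  shows "deriv (\<lambda>x. exp (f x)) = (\<lambda>x. deriv f x * exp (f x))"
proof
  fix x
  have "(f has_real_derivative deriv f x) (at x)"
    using assms by (auto simp: DERIV_deriv_iff_real_differentiable)
  then show "deriv (\<lambda>x. exp (f x)) x = deriv f x * exp (f x)"
    by (intro DERIV_imp_deriv) (auto intro!: derivative_eq_intros)
qed

lemma Ck_add: "Ck k f \<Longrightarrow> Ck k g \<Longrightarrow> Ck k (\<lambda>x. f x + g x)"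
proof (induction k arbitrary: f g)
  case 0 then show ?case by (auto simp: Ck_0)
next
  case (Suc k)
  then show ?case by (auto simp: Ck_Suc deriv_add_fun)
qed

lemma Ck_mult: "Ck k f \<Longrightarrow> Ck k g \<Longrightarrow> Ck k (\<lambda>x. f x * g x)"
proof (induction k arbitrary: f g)
  case 0 then show ?case by (auto simp: Ck_0)
next
  case (Suc k)
  then have df: "\<forall>x. f differentiable (at x)" and dg: "\<forall>x. g differentiable (at x)"
    and f': "Ck k (deriv f)" and g': "Ck k (deriv g)" and f: "Ck k f" and g: "Ck k g"
    by (auto simp: Ck_Suc intro: Ck_mono)
  have "Ck k (\<lambda>x. deriv f x * g x + f x * deriv g x)"
    by (intro Ck_add Suc.IH f' g' f g)
  then show ?case using df dg by (auto simp: Ck_Suc deriv_mult_fun)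
qed

lemma Ck_const: "Ck k (\<lambda>x. c)"
  by (induction k arbitrary: c) (auto simp: Ck_Suc Ck_0)

lemma exp_comp_differentiable:
  fixes f :: "real \<Rightarrow> real"
  assumes "f differentiable (at x)" shows "(\<lambda>x. exp (f x)) differentiable (at x)"
proof -
  obtain D where "(f has_real_derivative D) (at x)" using assms real_differentiable_def by blast
  then have "((\<lambda>x. exp (f x)) has_real_derivative exp (f x) * D) (at x)"
    by (auto intro!: derivative_eq_intros)
  then show ?thesis using real_differentiable_def by blast
qed

lemma Ck_exp: "Ck k f \<Longrightarrow> Ck k (\<lambda>x. exp (f x))"
proof (induction k arbitrary: f)
  case 0 then show ?case by (auto simp: Ck_0 intro!: exp_comp_differentiable)
next
  case (Suc k)
  then have df: "\<forall>x. f differentiable (at x)" and f': "Ck k (deriv f)" and f: "Ck k f"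
    by (auto simp: Ck_Suc intro: Ck_mono)
  have "Ck k (\<lambda>x. deriv f x * exp (f x))"
    by (intro Ck_mult f' Suc.IH f)
  moreover have "\<forall>x. (\<lambda>x. exp (f x)) differentiable (at x)"
    using df by (auto intro!: exp_comp_differentiable)
  ultimately show ?case using df by (auto simp: Ck_Suc deriv_exp_fun)
qed

lemma Ck_antideriv:
  fixes F f :: "real \<Rightarrow> real"
  assumes "\<forall>x. (F has_real_derivative f x) (at x)" "Ck k f"
  shows "Ck (Suc k) F"
proof -
  have "deriv F = f" using assms(1) by (auto intro: DERIV_imp_deriv)
  moreover have "\<forall>x. F differentiable (at x)" using assms(1) real_differentiable_def by blast
  ultimately show ?thesis using assms(2) by (simp add: Ck_Suc)
qed

lemma smooth_antideriv:
  fixes F f :: "real \<Rightarrow> real"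
  assumes "\<forall>x. (F has_real_derivative f x) (at x)" "smooth_real f"
  shows "smooth_real F"
  using assms by (auto simp: smooth_Ck intro: Ck_antideriv Ck_mono)

lemma smooth_add: "smooth_real f \<Longrightarrow> smooth_real g \<Longrightarrow> smooth_real (\<lambda>x. f x + g x)"
  by (simp add: smooth_Ck Ck_add)
lemma smooth_mult: "smooth_real f \<Longrightarrow> smooth_real g \<Longrightarrow> smooth_real (\<lambda>x. f x * g x)"
  by (simp add: smooth_Ck Ck_mult)
lemma smooth_const: "smooth_real (\<lambda>x. c)"
  by (simp add: smooth_Ck Ck_const)
lemma smooth_exp: "smooth_real f \<Longrightarrow> smooth_real (\<lambda>x. exp (f x))"
  by (simp add: smooth_Ck Ck_exp)

lemma antideriv_exists:
  fixes f :: "real \<Rightarrow> real"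
  assumes "continuous_on UNIV f"
  shows "\<exists>F. \<forall>x. (F has_real_derivative f x) (at x)"
proof -
  have "\<exists>F. \<forall>x :: real. (-\<infinity>::ereal) < x \<longrightarrow> x < \<infinity> \<longrightarrow> (F has_vector_derivative f x) (at x)"
    by (rule einterval_antiderivative) (use assms in \<open>auto simp: continuous_on_eq_continuous_at\<close>)
  then show ?thesis by (auto simp: has_real_derivative_iff_has_vector_derivative)
qed

lemma smooth_cont: "smooth_real f \<Longrightarrow> continuous_on UNIV f"
  unfolding smooth_real_def
  by (metis differentiable_imp_continuous_within continuous_at_imp_continuous_on funpow_0)




lemma fnormal_eq:
  fixes a p :: real assumes a: "a > 0"
  shows "fnormal (a * sinh p, a * cosh p) = (cosh p, sinh p)"
  unfolding fnormal_def
proof (rule the_equality)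
  show "future_unit_normal (a * sinh p, a * cosh p) (cosh p, sinh p)"
    unfolding future_unit_normal_def mink_def
    using cosh_square_eq[of p] by (auto simp: power2_eq_square algebra_simps)
next
  fix \<nu> assume h: "future_unit_normal (a * sinh p, a * cosh p) \<nu>"
  obtain x y where nu: "\<nu> = (x, y)" by fastforce
  have e1: "- x * (a * sinh p) + y * (a * cosh p) = 0" and e2: "- x * x + y * y = -1" and xp: "x > 0"
    using h by (auto simp: future_unit_normal_def mink_def nu)
  have ch: "cosh p > 0" by (simp add: cosh_real_pos)
  have e1': "y * cosh p = x * sinh p" using e1 a by (simp add: algebra_simps)
  have s1: "x^2 * (cosh p)^2 = y^2 * (cosh p)^2 + x^2"
  proof -
    have "x^2 * (cosh p)^2 = x^2 * ((sinh p)^2 + 1)" by (simp only: cosh_square_eq)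
    also have "\<dots> = (x * sinh p)^2 + x^2" by (simp add: algebra_simps power_mult_distrib)
    also have "\<dots> = (y * cosh p)^2 + x^2" by (simp add: e1')
    finally show ?thesis by (simp add: power_mult_distrib)
  qed
  have "y^2 = x^2 - 1" using e2 by (simp add: power2_eq_square)
  with s1 have "x^2 = (cosh p)^2" by (simp add: algebra_simps)
  then have xx: "x = cosh p" using xp ch
    by (metis power2_eq_iff_nonneg less_imp_le)
  then have "y = sinh p" using e1' ch by simp
  then show "\<nu> = (cosh p, sinh p)" using nu xx by simp
qed

locale cdata =
  fixes a chi u0 w0 :: real and tb T P0 Q0 :: "real \<Rightarrow> real"
  assumes a_pos: "a > 0"
   and T_der: "\<And>x. (T has_real_derivative tb x) (at x)"
   and P0_der: "\<And>x. (P0 has_real_derivative exp (a * T x)) (at x)"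
   and Q0_der: "\<And>x. (Q0 has_real_derivative exp (- (a * T x))) (at x)"
   and tb_smooth: "smooth_real tb"
begin

definition "phi s = a * T s + chi"
definition "u s = u0 + a * (exp chi * P0 s - exp chi * P0 0)"
definition "w s = w0 - a * (exp (-chi) * Q0 s - exp (-chi) * Q0 0)"
definition "gam s = ((u s + w s)/2, (u s - w s)/2)"

lemma phi_der: "(phi has_real_derivative a * tb s) (at s)"
  unfolding phi_def[abs_def] by (auto intro!: derivative_eq_intros T_der)

lemma u_der: "(u has_real_derivative a * exp (phi s)) (at s)"
  unfolding u_def[abs_def] phi_def
  by (rule derivative_eq_intros P0_der refl | simp add: exp_add)+

lemma w_der: "(w has_real_derivative - (a * exp (- phi s))) (at s)"
  unfolding w_def[abs_def] phi_def
  by (rule derivative_eq_intros Q0_der refl | simp add: exp_add exp_diff exp_minus field_simps)+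

lemma gam_der: "(gam has_vector_derivative (a * sinh (phi s), a * cosh (phi s))) (at s)"
proof -
  have d1: "((\<lambda>s. (u s + w s)/2) has_real_derivative (a * exp (phi s) + - (a * exp (- phi s)))/2) (at s)"
    by (intro DERIV_cdivide DERIV_add u_der w_der)
  have d2: "((\<lambda>s. (u s - w s)/2) has_real_derivative (a * exp (phi s) - - (a * exp (- phi s)))/2) (at s)"
    by (intro DERIV_cdivide DERIV_diff u_der w_der)
  have e1: "(a * exp (phi s) + - (a * exp (- phi s)))/2 = a * sinh (phi s)"
    by (simp add: sinh_def field_simps)
  have e2: "(a * exp (phi s) - - (a * exp (- phi s)))/2 = a * cosh (phi s)"
    by (simp add: cosh_def field_simps)
  show ?thesis using d1 d2 unfolding gam_def[abs_def] e1 e2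
    by (intro has_vector_derivative_Pair) (auto simp: has_real_derivative_iff_has_vector_derivative)
qed

lemma dcurve_eq: "dcurve gam = (\<lambda>s. (a * sinh (phi s), a * cosh (phi s)))"
  unfolding dcurve_def using gam_der by (auto intro!: vector_derivative_at)

lemma dd_der: "(dcurve gam has_vector_derivative (a * a * tb s * cosh (phi s), a * a * tb s * sinh (phi s))) (at s)"
proof -
  have "((\<lambda>s. a * sinh (phi s)) has_real_derivative a * a * tb s * cosh (phi s)) (at s)"
    by (rule derivative_eq_intros phi_der refl | simp)+
  moreover have "((\<lambda>s. a * cosh (phi s)) has_real_derivative a * a * tb s * sinh (phi s)) (at s)"
    by (rule derivative_eq_intros phi_der refl | simp)+
  ultimately show ?thesis unfolding dcurve_eq
    by (intro has_vector_derivative_Pair) (auto simp: has_real_derivative_iff_has_vector_derivative)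
qed

lemma ddcurve_eq: "ddcurve gam s = (a * a * tb s * cosh (phi s), a * a * tb s * sinh (phi s))"
  unfolding ddcurve_def using dd_der by (auto intro!: vector_derivative_at)

lemma metric_eq: "mink (dcurve gam s) (dcurve gam s) = a^2"
  unfolding dcurve_eq mink_def using cosh_square_eq[of "phi s"]
  by (simp add: power2_eq_square algebra_simps)

lemma sff_eq: "- mink (fnormal (dcurve gam s)) (ddcurve gam s) = tb s * a^2"
proof -
  have "- mink (fnormal (dcurve gam s)) (ddcurve gam s)
      = - mink (cosh (phi s), sinh (phi s)) (a * a * tb s * cosh (phi s), a * a * tb s * sinh (phi s))"
    by (simp add: dcurve_eq ddcurve_eq fnormal_eq a_pos)
  also have "\<dots> = a * a * tb s * ((cosh (phi s))^2 - (sinh (phi s))^2)"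
    by (simp add: mink_def power2_eq_square algebra_simps)
  also have "\<dots> = tb s * a^2"
  proof -
    have "(cosh (phi s))^2 - (sinh (phi s))^2 = 1" by (simp add: cosh_square_eq)
    then show ?thesis by (simp add: power2_eq_square)
  qed
  finally show ?thesis .
qed

lemma dcurve_nz: "dcurve gam s \<noteq> 0"
  using a_pos cosh_real_pos[of "phi s"] by (simp add: dcurve_eq zero_prod_def)

lemma phi_smooth: "smooth_real phi"
  by (rule smooth_antideriv[of _ "\<lambda>s. a * tb s"]) (auto intro: phi_der smooth_mult smooth_const tb_smooth)

lemma u_smooth: "smooth_real u"
proof (rule smooth_antideriv[of _ "\<lambda>s. a * exp (phi s)"])
  show "smooth_real (\<lambda>s. a * exp (phi s))"
    by (intro smooth_mult smooth_const smooth_exp phi_smooth)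
qed (auto intro: u_der)

lemma w_smooth: "smooth_real w"
proof (rule smooth_antideriv[of _ "\<lambda>s. - (a * exp (- phi s))"])
  have "smooth_real (\<lambda>s. (- a) * exp ((-1) * phi s))"
    by (intro smooth_mult smooth_const smooth_exp phi_smooth)
  then show "smooth_real (\<lambda>s. - (a * exp (- phi s)))" by simp
qed (auto intro: w_der)

lemma gam_smooth: "smooth_curve gam"
proof -
  have "smooth_real (\<lambda>s. (u s + w s) * (1/2))" "smooth_real (\<lambda>s. (u s + (-1) * w s) * (1/2))"
    by (intro smooth_mult smooth_add smooth_const u_smooth w_smooth)+
  then show ?thesis unfolding smooth_curve_def gam_def by (simp add: field_simps)
qed

lemma u_mono: assumes "x < y" shows "u x < u y"
proof (rule DERIV_pos_imp_increasing[of x y u, OF assms])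
  fix z show "\<exists>y. (u has_real_derivative y) (at z) \<and> 0 < y"
    using u_der[of z] a_pos by (intro exI[of _ "a * exp (phi z)"]) auto
qed

lemma w_mono: assumes "x < y" shows "w y < w x"
proof (rule DERIV_neg_imp_decreasing[of x y w, OF assms])
  fix z show "\<exists>y. (w has_real_derivative y) (at z) \<and> y < 0"
    using w_der[of z] a_pos by (intro exI[of _ "- (a * exp (- phi z))"]) auto
qed

lemma u_inj: "u x = u y \<Longrightarrow> x = y"
  using u_mono by (metis less_irrefl linorder_neqE)

lemma gam_u: "u s = fst (gam s) + snd (gam s)"
  by (simp add: gam_def field_simps)

lemma gam_inj: "gam x = gam y \<Longrightarrow> x = y"
  using gam_u u_inj by metis

end



lemma iter_mult_nat:
  fixes f :: "real \<Rightarrow> real"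
  assumes h: "\<And>s. f (s+1) = exp p * f s"
  shows "f (s + real m) = exp (real m * p) * f s"
proof (induction m)
  case 0 then show ?case by simp
next
  case (Suc m)
  have "f (s + real (Suc m)) = f ((s + real m) + 1)" by (simp add: algebra_simps)
  also have "\<dots> = exp p * f (s + real m)" by (rule h)
  also have "\<dots> = exp (real (Suc m) * p) * f s" using Suc by (simp add: algebra_simps exp_add)
  finally show ?case .
qed

lemma iter_mult:
  fixes f :: "real \<Rightarrow> real"
  assumes h: "\<And>s. f (s+1) = exp p * f s"
  shows "f (s + of_int k) = exp (of_int k * p) * f s"
proof (cases "k \<ge> 0")
  case True
  then have "k = int (nat k)" by simp
  then show ?thesis using iter_mult_nat[of f p, OF h, of s "nat k"] by (metis of_int_of_nat_eq)
next
  case False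
  define m where "m = nat (- k)"
  have k: "of_int k = - real m" using False by (simp add: m_def)
  have "f s = f ((s - real m) + real m)" by simp
  also have "\<dots> = exp (real m * p) * f (s - real m)" by (rule iter_mult_nat[of f p, OF h])
  finally have "f (s - real m) = exp (- (real m * p)) * f s"
    by (simp add: exp_minus field_simps)
  then show ?thesis using k by simp
qed

lemma iter_add_nat:
  fixes f :: "real \<Rightarrow> real"
  assumes h: "\<And>s. f (s+1) = f s + d"
  shows "f (s + real m) = f s + real m * d"
proof (induction m)
  case 0 then show ?case by simp
next
  case (Suc m)
  have "f (s + real (Suc m)) = f ((s + real m) + 1)" by (simp add: algebra_simps)
  also have "\<dots> = f (s + real m) + d" by (rule h)
  also have "\<dots> = f s + real (Suc m) * d" using Suc by (simp add: algebra_simps)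
  finally show ?case .
qed

lemma iter_add:
  fixes f :: "real \<Rightarrow> real"
  assumes h: "\<And>s. f (s+1) = f s + d"
  shows "f (s + of_int k) = f s + of_int k * d"
proof (cases "k \<ge> 0")
  case True
  then have "k = int (nat k)" by simp
  then show ?thesis using iter_add_nat[of f d, OF h, of s "nat k"] by (metis of_int_of_nat_eq)
next
  case False
  define m where "m = nat (- k)"
  have k: "of_int k = - real m" using False by (simp add: m_def)
  have "f s = f ((s - real m) + real m)" by simp
  also have "\<dots> = f (s - real m) + real m * d" by (rule iter_add_nat[of f d, OF h])
  finally have "f (s - real m) = f s - real m * d" by simp
  then show ?thesis using k by simp
qed

lemma boost_uw:
  "boost p ((U + W)/2, (U - W)/2) = ((exp p * U + exp (-p) * W)/2, (exp p * U - exp (-p) * W)/2)"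
  unfolding boost_def cosh_plus_sinh[symmetric] cosh_minus_sinh[symmetric]
  by (simp add: algebra_simps add_divide_distrib diff_divide_distrib)

lemma int_small: "s \<in> {0..<1} \<Longrightarrow> s' \<in> {0..<1} \<Longrightarrow> s = s' + of_int (k::int) \<Longrightarrow> s = (s'::real)"
proof -
  assume "s \<in> {0..<1}" "s' \<in> {0..<1}" "s = s' + of_int k"
  then have "of_int k < (1::real)" "of_int k > (-1::real)" by auto
  then have "k < 1" "k > -1" by linarith+
  then have "k = 0" by simp
  with \<open>s = s' + of_int k\<close> show ?thesis by simp
qed

locale cdata_per = cdata +
  assumes tb_per: "\<And>x. tb (x+1) = tb x"
begin

definition "Psi = a * (T 1 - T 0)"

lemma phi_shift: "phi (s+1) = phi s + Psi"
proof -
  have "\<forall>x. ((\<lambda>s. phi (s+1) - phi s) has_real_derivative 0) (at x)"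
  proof
    fix x
    have "((\<lambda>s. phi (s+1)) has_real_derivative a * tb (x+1)) (at x)"
      using phi_der[of "x+1"] by (simp add: DERIV_shift)
    then have "((\<lambda>s. phi (s+1) - phi s) has_real_derivative a * tb (x+1) - a * tb x) (at x)"
      by (intro DERIV_diff phi_der)
    then show "((\<lambda>s. phi (s+1) - phi s) has_real_derivative 0) (at x)" by (simp add: tb_per)
  qed
  from DERIV_isconst_all[OF this, of s 0] show ?thesis
    by (simp add: Psi_def phi_def algebra_simps)
qed

lemma u_shift: "u (s+1) - exp Psi * u s = u 1 - exp Psi * u 0"
proof -
  have "\<forall>x. ((\<lambda>s. u (s+1) - exp Psi * u s) has_real_derivative 0) (at x)"
  proof
    fix x
    have "((\<lambda>s. u (s+1)) has_real_derivative a * exp (phi (x+1))) (at x)"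
      using u_der[of "x+1"] by (simp add: DERIV_shift)
    then have "((\<lambda>s. u (s+1) - exp Psi * u s) has_real_derivative a * exp (phi (x+1)) - exp Psi * (a * exp (phi x))) (at x)"
      by (intro DERIV_diff DERIV_cmult u_der)
    then show "((\<lambda>s. u (s+1) - exp Psi * u s) has_real_derivative 0) (at x)"
      by (simp add: phi_shift exp_add)
  qed
  from DERIV_isconst_all[OF this, of s 0] show ?thesis by simp
qed

lemma w_shift: "w (s+1) - exp (-Psi) * w s = w 1 - exp (-Psi) * w 0"
proof -
  have "\<forall>x. ((\<lambda>s. w (s+1) - exp (-Psi) * w s) has_real_derivative 0) (at x)"
  proof
    fix x
    have "((\<lambda>s. w (s+1)) has_real_derivative - (a * exp (- phi (x+1)))) (at x)"
      using w_der[of "x+1"] by (simp add: DERIV_shift)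
    then have "((\<lambda>s. w (s+1) - exp (-Psi) * w s) has_real_derivative - (a * exp (- phi (x+1))) - exp (-Psi) * (- (a * exp (- phi x)))) (at x)"
      by (intro DERIV_diff DERIV_cmult w_der)
    moreover have "exp (- phi (x+1)) = exp (-Psi) * exp (- phi x)"
      by (simp add: phi_shift exp_add[symmetric])
    ultimately show "((\<lambda>s. w (s+1) - exp (-Psi) * w s) has_real_derivative 0) (at x)"
      by simp
  qed
  from DERIV_isconst_all[OF this, of s 0] show ?thesis by simp
qed

lemma kasner:
  assumes Pnz: "Psi \<noteq> 0"
    and hu: "u 1 = exp Psi * u 0" and hw: "w 1 = exp (-Psi) * w 0"
    and pos: "Psi > 0 \<Longrightarrow> u 0 > 0 \<and> w 0 > 0"
    and neg: "Psi < 0 \<Longrightarrow> u 0 < 0 \<and> w 0 < 0"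
  shows "kasner_curve Psi gam"
proof -
  have us: "\<And>s. u (s+1) = exp Psi * u s" using u_shift hu by (metis eq_iff_diff_eq_0 right_minus_eq)
  have ws: "\<And>s. w (s+1) = exp (-Psi) * w s" using w_shift hw by (metis eq_iff_diff_eq_0 right_minus_eq)
  have uk: "\<And>s k. u (s + of_int k) = exp (of_int k * Psi) * u s" by (rule iter_mult[of u Psi, OF us])
  have wk: "\<And>s k. w (s + of_int k) = exp (of_int k * (-Psi)) * w s" by (rule iter_mult[of w "-Psi", OF ws])
  have bk: "\<And>s k. gam (s + of_int k) = boost (of_int k * Psi) (gam s)"
    unfolding gam_def boost_uw uk wk by simp
  have u0k: "\<And>k. u (of_int k) = exp (of_int k * Psi) * u 0" using uk[of 0] by simp
  have w0k: "\<And>k. w (of_int k) = exp (of_int k * (-Psi)) * w 0" using wk[of 0] by simp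
  have mono_u: "\<And>x y. x \<le> y \<Longrightarrow> u x \<le> u y" using u_mono by (metis less_eq_real_def)
  have mono_w: "\<And>x y. x \<le> y \<Longrightarrow> w y \<le> w x" using w_mono by (metis less_eq_real_def)
  have Ip: "I_plus (gam s)" if "Psi > 0" for s
  proof -
    have "u (of_int (floor s)) > 0" "w (of_int (ceiling s)) > 0"
      using pos[OF that] u0k w0k by auto
    moreover have "u (of_int (floor s)) \<le> u s" "w s \<ge> w (of_int (ceiling s))"
      by (auto intro!: mono_u mono_w)
    ultimately have "u s > 0" "w s > 0" by linarith+
    then show ?thesis unfolding I_plus_def gam_def fst_conv snd_conv abs_less_iff by (simp add: field_simps)
  qed
  have Im: "I_minus (gam s)" if "Psi < 0" for s
  proof -
    have "u (of_int (ceiling s)) < 0" "w (of_int (floor s)) < 0"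
      using neg[OF that] u0k w0k by (auto simp: mult_pos_neg)
    moreover have "u s \<le> u (of_int (ceiling s))" "w (of_int (floor s)) \<ge> w s"
      by (auto intro!: mono_u mono_w)
    ultimately have "u s < 0" "w s < 0" by linarith+
    then show ?thesis unfolding I_minus_def gam_def fst_conv snd_conv abs_less_iff by (simp add: field_simps)
  qed
  have inj: "s = s'" if "s \<in> {0..<1}" "s' \<in> {0..<1}" "gam s = boost (of_int k * Psi) (gam s')" for s s' k
  proof -
    have "gam s = gam (s' + of_int k)" using that bk by simp
    then have "s = s' + of_int k" by (rule gam_inj)
    then show ?thesis using int_small that by blast
  qed
  have per: "\<forall>s. gam (s + 1) = boost (of_int (1::int) * Psi) (gam s)"
    using bk[of _ 1] by simp
  show ?thesis unfolding kasner_curve_def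
    using Pnz gam_smooth Ip Im per inj dcurve_nz by blast
qed

lemma cylinder:
  assumes P0: "Psi = 0"
    and hc: "(u 1 - u 0) + (w 1 - w 0) = 0"
  shows "cylinder_curve ((u 1 - u 0 - (w 1 - w 0))/2) gam"
proof -
  define L where "L = (u 1 - u 0 - (w 1 - w 0))/2"
  have us: "u (s+1) = u s + (u 1 - u 0)" for s using u_shift[of s] by (simp add: P0)
  have ws: "w (s+1) = w s + (w 1 - w 0)" for s using w_shift[of s] by (simp add: P0)
  have uk: "\<And>s k. u (s + of_int k) = u s + of_int k * (u 1 - u 0)" by (rule iter_add[of u "u 1 - u 0", OF us])
  have wk: "\<And>s k. w (s + of_int k) = w s + of_int k * (w 1 - w 0)" by (rule iter_add[of w "w 1 - w 0", OF ws])
  have gk: "\<And>s k. gam (s + of_int k) = gam s + (0, of_int k * L)"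
  proof -
    fix s k
    have "of_int k * (u 1 - u 0) + of_int k * (w 1 - w 0) = (0::real)"
      using hc by (simp add: algebra_simps) (metis distrib_left mult_zero_right)
    then show "gam (s + of_int k) = gam s + (0, of_int k * L)"
      unfolding gam_def uk wk L_def by (simp add: field_simps)
  qed
  have Lpos: "L > 0" using u_mono[of 0 1] w_mono[of 0 1] by (simp add: L_def)
  have inj: "s = s'" if "s \<in> {0..<1}" "s' \<in> {0..<1}" "gam s = gam s' + (0, of_int k * L)" for s s' k
  proof -
    have "gam s = gam (s' + of_int k)" using that gk by simp
    then have "s = s' + of_int k" by (rule gam_inj)
    then show ?thesis using int_small that by blast
  qed
  have per: "\<forall>s. gam (s + 1) = gam s + (0, of_int (1::int) * L)"
    using gk[of _ 1] by simp
  show ?thesis unfolding cylinder_curve_def L_def[symmetric]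
    using Lpos gam_smooth per inj dcurve_nz by blast
qed

end



lemma prob_unit: "prob_space (restrict_space lborel {0..1::real})"
  by (intro prob_spaceI) (simp add: space_restrict_space emeasure_restrict_space)

lemma integral_comp1:
  fixes g :: "real \<Rightarrow> real" and n :: nat
  assumes n: "n \<ge> 1" and gc: "continuous_on UNIV g"
  shows "integral\<^sup>L (PiM {1..n} (\<lambda>_. restrict_space lborel {0..1::real})) (\<lambda>s. g (s 1))
       = integral\<^sup>L (restrict_space lborel {0..1::real}) g"
proof -
  let ?M = "restrict_space lborel {0..1::real}"
  have ps: "prob_space ?M" by (rule prob_unit)
  interpret pps: product_prob_space "\<lambda>_. ?M" "{1..n}"
    unfolding product_prob_space_def product_prob_space_axioms_def product_sigma_finite_def
    using ps by (auto intro: prob_space_imp_sigma_finite)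
  have gm: "g \<in> borel_measurable ?M"
    using borel_measurable_continuous_onI[OF gc]
    by (intro measurable_restrict_space1) simp
  have de: "distr (PiM {1..n} (\<lambda>_. ?M)) ?M (\<lambda>\<omega>. \<omega> 1) = ?M"
    by (rule pps.PiM_component) (use n in \<open>simp add: atLeastAtMost_iff\<close>)
  have "integral\<^sup>L ?M g = integral\<^sup>L (distr (PiM {1..n} (\<lambda>_. ?M)) ?M (\<lambda>\<omega>. \<omega> 1)) g"
    unfolding de ..
  also have "\<dots> = integral\<^sup>L (PiM {1..n} (\<lambda>_. ?M)) (\<lambda>s. g (s 1))"
    by (rule integral_distr[OF _ gm], rule measurable_component_singleton) (use n in auto)
  finally show ?thesis by simp
qed

lemma integral_unit:
  fixes g G :: "real \<Rightarrow> real"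
  assumes G: "\<And>x. (G has_real_derivative g x) (at x)" and gc: "continuous_on UNIV g"
  shows "integral\<^sup>L (restrict_space lborel {0..1::real}) g = G 1 - G 0"
proof -
  have "integral\<^sup>L (restrict_space lborel {0..1::real}) g = (\<integral>x. indicator {0..1::real} x *\<^sub>R g x \<partial>lborel)"
    by (rule integral_restrict_space) simp
  also have "\<dots> = (\<integral>x. g x * indicator {0..1} x \<partial>lborel)"
    by (simp add: mult.commute)
  also have "\<dots> = G 1 - G 0"
    by (rule integral_FTC_Icc_real) (use G gc in \<open>auto simp: continuous_on_eq_continuous_at\<close>)
  finally show ?thesis .
qed

lemma torus_int_s1:
  fixes g G :: "real \<Rightarrow> real"
  assumes n: "n \<ge> 1" and G: "\<And>x. (G has_real_derivative g x) (at x)" and gc: "continuous_on UNIV g"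
  shows "torus_integral n l (\<lambda>s. g (s 1)) = (\<Prod>k\<in>{1..n}. l k) * (G 1 - G 0)"
  unfolding torus_integral_def integral_comp1[OF n gc] integral_unit[OF G gc] ..




lemma (in cdata) sp_ok:
  fixes n :: nat and rl :: "nat \<Rightarrow> real"
  assumes "rl 1 = a" "n \<ge> 1"
  shows "sp_induces n rl gam (\<lambda>i j s. torus_metric n rl i j)
           (\<lambda>i j s. if i = 1 \<and> j = 1 then tb (s 1) * (rl 1)^2 else 0)"
  unfolding sp_induces_def sp_induced_metric_def sp_sff_def torus_metric_def
  using metric_eq sff_eq assms
  by (auto simp: not_less_eq_eq)

lemma incr01:
  fixes P f :: "real \<Rightarrow> real"
  assumes "\<And>x. (P has_real_derivative exp (f x)) (at x)"
  shows "P 0 < P 1"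
proof (rule DERIV_pos_imp_increasing[of 0 1 P])
  fix z show "\<exists>y. (P has_real_derivative y) (at z) \<and> 0 < y"
    using assms[of z] by (intro exI[of _ "exp (f z)"]) auto
qed simp

theorem proposition7p2:
  fixes n :: nat and l :: "nat \<Rightarrow> real" and \<xi> N :: "real \<Rightarrow> real"
    and \<mu> \<tau>s c :: real
  assumes n3: "n \<ge> 3"
    and lpos: "\<forall>k\<in>{1..n}. l k > 0"
    and xi_smooth: "smooth_real \<xi>" and xi_per: "\<forall>x. \<xi> (x + 1) = \<xi> x"
    and N_smooth: "smooth_real N" and N_per: "\<forall>x. N (x + 1) = N x"
    and N_pos: "\<forall>x. N x > 0"
    and int0: "torus_integral n l (\<lambda>s. \<xi> (s 1) * N (s 1)) = 0"
    and cases: "(\<mu> \<noteq> 0 \<and> \<tau>s \<noteq> 0 \<and> sgn \<mu> = sgn \<tau>s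
                   \<and> c = (\<mu> / \<tau>s) powr (1 / (2 * real n / (real n - 2))))
              \<or> (\<mu> = 0 \<and> \<tau>s = 0 \<and> c > 0)"
  shows
    "let q = 2 * real n / (real n - 2);
         r = c powr ((q - 2) / 2);
         taubar = (\<lambda>x. \<tau>s + c powr (- 2 * q) * \<xi> x);
         rl = (\<lambda>k. r * l k);
         gbar = (\<lambda>i j (s::nat \<Rightarrow> real). torus_metric n rl i j);
         Kbar = (\<lambda>i j (s::nat \<Rightarrow> real). if i = 1 \<and> j = 1 then taubar (s 1) * (rl 1)^2 else 0);
         tau0 = torus_integral n rl (\<lambda>s. taubar (s 1)) / torus_integral n rl (\<lambda>s. 1);
         lhat = rl
     in (tau0 \<noteq> 0 \<longrightarrow>
           (\<exists>\<gamma>. kasner_curve (rl 1 * tau0) \<gamma> \<and> sp_induces n lhat \<gamma> gbar Kbar))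
      \<and> (tau0 = 0 \<longrightarrow>
           (\<exists>L \<gamma>. L > 0 \<and> cylinder_curve L \<gamma> \<and> sp_induces n lhat \<gamma> gbar Kbar))"
proof -
  define q where "q = 2 * real n / (real n - 2)"
  define r where "r = c powr ((q - 2) / 2)"
  define C where "C = c powr (- 2 * q)"
  define tb where "tb = (\<lambda>x. \<tau>s + C * \<xi> x)"
  define rl where "rl = (\<lambda>k. r * l k)"
  define a where "a = rl 1"
  have n1: "n \<ge> 1" using n3 by simp
  have cpos: "c > 0" using cases by auto
  have rpos: "r > 0" using cpos by (simp add: r_def)
  have apos: "a > 0" using lpos n1 rpos by (simp add: a_def rl_def)
  have tb_smooth: "smooth_real tb" unfolding tb_def
    by (intro smooth_add smooth_mult smooth_const xi_smooth)
  have tb_per: "\<And>x. tb (x + 1) = tb x" using xi_per by (simp add: tb_def)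
  obtain T where T: "\<And>x. (T has_real_derivative tb x) (at x)"
    using antideriv_exists[OF smooth_cont[OF tb_smooth]] by blast
  have T_smooth: "smooth_real T" by (rule smooth_antideriv) (use T tb_smooth in auto)
  have e1: "smooth_real (\<lambda>x. exp (a * T x))"
    by (intro smooth_exp smooth_mult smooth_const T_smooth)
  have e2: "smooth_real (\<lambda>x. exp ((- a) * T x))"
    by (intro smooth_exp smooth_mult smooth_const T_smooth)
  obtain P0 where P0: "\<And>x. (P0 has_real_derivative exp (a * T x)) (at x)"
    using antideriv_exists[OF smooth_cont[OF e1]] by blast
  obtain Q0 where Q0: "\<And>x. (Q0 has_real_derivative exp (- (a * T x))) (at x)"
    using antideriv_exists[OF smooth_cont[OF e2]] by auto
  have prodpos: "(\<Prod>k\<in>{1..n}. rl k) > 0"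
    using lpos rpos by (auto simp: rl_def intro!: prod_pos)
  define tau0 where "tau0 = torus_integral n rl (\<lambda>s. tb (s 1)) / torus_integral n rl (\<lambda>s. 1)"
  have tau0_eq: "tau0 = T 1 - T 0"
  proof -
    have "torus_integral n rl (\<lambda>s. tb (s 1)) = (\<Prod>k\<in>{1..n}. rl k) * (T 1 - T 0)"
      by (rule torus_int_s1[OF n1 T smooth_cont[OF tb_smooth]])
    moreover have "torus_integral n rl (\<lambda>s. 1) = (\<Prod>k\<in>{1..n}. rl k) * (1 - 0)"
      using torus_int_s1[OF n1, of "\<lambda>x. x" "\<lambda>_. 1" rl] by (auto intro: derivative_eq_intros)
    ultimately have "tau0 = ((\<Prod>k\<in>{1..n}. rl k) * (T 1 - T 0)) / ((\<Prod>k\<in>{1..n}. rl k) * 1)"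
      by (simp only: tau0_def diff_zero)
    also have "\<dots> = T 1 - T 0"
      unfolding mult_1_right using prodpos by (intro nonzero_mult_div_cancel_left) linarith
    finally show ?thesis .
  qed
  have A: "P0 0 < P0 1" by (rule incr01[OF P0])
  have B: "Q0 0 < Q0 1" by (rule incr01[OF Q0])
  have K: "\<exists>\<gamma>. kasner_curve (rl 1 * tau0) \<gamma> \<and>
             sp_induces n rl \<gamma> (\<lambda>i j s. torus_metric n rl i j)
               (\<lambda>i j s. if i = 1 \<and> j = 1 then tb (s 1) * (rl 1)^2 else 0)" if tz: "tau0 \<noteq> 0"
  proof -
    define Psi where "Psi = a * (T 1 - T 0)"
    define u0 where "u0 = a * (P0 1 - P0 0) / (exp Psi - 1)"
    define w0 where "w0 = a * (Q0 1 - Q0 0) / (1 - exp (- Psi))"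
    interpret K: cdata_per a 0 u0 w0 tb T P0 Q0
      by unfold_locales (use apos T P0 Q0 tb_smooth tb_per in auto)
    have PsiK: "K.Psi = Psi" by (simp add: K.Psi_def Psi_def)
    have Pnz: "Psi \<noteq> 0" using tz apos tau0_eq by (simp add: Psi_def)
    have e1: "exp Psi - 1 \<noteq> 0" "1 - exp (- Psi) \<noteq> 0" using Pnz by auto
    have hu: "K.u 1 = exp Psi * K.u 0"
      using e1 unfolding K.u_def by (simp add: u0_def field_simps)
    have hw: "K.w 1 = exp (- Psi) * K.w 0"
      using e1 unfolding K.w_def by (simp add: w0_def field_simps)
    have pos: "K.u 0 > 0 \<and> K.w 0 > 0" if "Psi > 0"
    proof -
      have "exp Psi > 1" "exp (- Psi) < 1" using that by auto
      then show ?thesis using A B apos unfolding K.u_def K.w_def by (auto simp: u0_def w0_def)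
    qed
    have neg: "K.u 0 < 0 \<and> K.w 0 < 0" if "Psi < 0"
    proof -
      have "exp Psi < 1" "exp (- Psi) > 1" using that by auto
      then show ?thesis using A B apos unfolding K.u_def K.w_def
        by (auto simp: u0_def w0_def divide_pos_neg)
    qed
    have "kasner_curve Psi K.gam"
      by (rule K.kasner[unfolded PsiK]) (use Pnz hu hw pos neg in auto)
    moreover have "Psi = rl 1 * tau0" by (simp add: Psi_def a_def tau0_eq)
    ultimately show ?thesis using K.sp_ok[of rl n, OF _ n1] by (auto simp: a_def)
  qed
  have Cy: "\<exists>L \<gamma>. L > 0 \<and> cylinder_curve L \<gamma> \<and>
             sp_induces n rl \<gamma> (\<lambda>i j s. torus_metric n rl i j)
               (\<lambda>i j s. if i = 1 \<and> j = 1 then tb (s 1) * (rl 1)^2 else 0)" if tz: "tau0 = 0"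
  proof -
    define chi where "chi = ln ((Q0 1 - Q0 0) / (P0 1 - P0 0)) / 2"
    interpret K: cdata_per a chi 0 0 tb T P0 Q0
      by unfold_locales (use apos T P0 Q0 tb_smooth tb_per in auto)
    have P0: "K.Psi = 0" using tz tau0_eq by (simp add: K.Psi_def)
    have ee: "exp chi * exp chi = (Q0 1 - Q0 0) / (P0 1 - P0 0)"
      using A B by (simp add: chi_def exp_add[symmetric])
    have "exp chi * (P0 1 - P0 0) = exp (- chi) * (Q0 1 - Q0 0)"
      using ee A by (simp add: exp_minus field_simps)
    then have "a * (exp chi * (P0 1 - P0 0)) = a * (exp (- chi) * (Q0 1 - Q0 0))" by simp
    then have hc: "(K.u 1 - K.u 0) + (K.w 1 - K.w 0) = 0"
      unfolding K.u_def K.w_def by (simp add: algebra_simps)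
    have cyl: "cylinder_curve ((K.u 1 - K.u 0 - (K.w 1 - K.w 0))/2) K.gam"
      by (rule K.cylinder[OF P0 hc])
    moreover have "(K.u 1 - K.u 0 - (K.w 1 - K.w 0))/2 > 0" using cyl unfolding cylinder_curve_def by blast
    ultimately show ?thesis using K.sp_ok[of rl n, OF a_def[symmetric] n1] by blast
  qed
  show ?thesis
    unfolding Let_def
    using K[unfolded tau0_def tb_def rl_def C_def r_def q_def] Cy[unfolded tau0_def tb_def rl_def C_def r_def q_def]
    by blast
qed


end
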